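(* Let $G$ be a triangle-free $2$-degenerate graph on $n\ge1$ vertices. Then $\sqrt[n]{\tilde b(G)}\le\Gamma_2$, where $\Gamma_2\approx1.2207$ is the unique root in $[1,2]$ of $x^4-x-1=0$.
   Context: A graph is $2$-degenerate if every induced subgraph has a vertex of degree at most $2$. $\mathrm{Ind}(G)$ is the independence complex of $G$ (including the empty face), and $\tilde b(G)=\sum_{i\ge-1}\dim_{\mathbb{K}}\widetilde H_i(\mathrm{Ind}(G);\mathbb{K})$ for a fixed field $\mathbb{K}$. *)

theory Defs
  imports Complex_Main "HOL-Library.Function_Algebras"
begin

text \<open>Simple graph on a finite vertex set V with symmetric irreflexive adjacency E.\<close>

definition triangle_free :: "'a set \<Rightarrow> ('a \<Rightarrow> 'a \<Rightarrow> bool) \<Rightarrow> bool" where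
  "triangle_free V E \<longleftrightarrow>
     \<not> (\<exists>x\<in>V. \<exists>y\<in>V. \<exists>z\<in>V. E x y \<and> E y z \<and> E x z)"

definition two_degenerate :: "'a set \<Rightarrow> ('a \<Rightarrow> 'a \<Rightarrow> bool) \<Rightarrow> bool" where
  "two_degenerate V E \<longleftrightarrow>
     (\<forall>S. S \<subseteq> V \<and> S \<noteq> {} \<longrightarrow> (\<exists>v\<in>S. card {u\<in>S. E v u} \<le> 2))"

definition ind_face :: "'a set \<Rightarrow> ('a \<Rightarrow> 'a \<Rightarrow> bool) \<Rightarrow> 'a set \<Rightarrow> bool" where
  "ind_face V E \<sigma> \<longleftrightarrow> \<sigma> \<subseteq> V \<and> (\<forall>x\<in>\<sigma>. \<forall>y\<in>\<sigma>. \<not> E x y)"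

text \<open>Simplicial chains with coefficients in the field 'k, supported on faces with
  exactly j vertices (i.e. of dimension j-1); j = 0 is the empty face (augmentation).\<close>
definition chains :: "'k itself \<Rightarrow> 'a set \<Rightarrow> ('a \<Rightarrow> 'a \<Rightarrow> bool) \<Rightarrow> nat \<Rightarrow> ('a set \<Rightarrow> 'k::field) set" where
  "chains _ V E j = {c. \<forall>\<sigma>. c \<sigma> \<noteq> 0 \<longrightarrow> ind_face V E \<sigma> \<and> card \<sigma> = j}"

text \<open>Simplicial boundary map (orientation from the linear order on vertices):
  the coefficient of face \<tau> in the boundary of c.\<close>
definition bdry :: "'a set \<Rightarrow> ('a set \<Rightarrow> 'k::field) \<Rightarrow> ('a::linorder) set \<Rightarrow> 'k" where
  "bdry V c \<tau> = (\<Sum>v\<in>V - \<tau>. (-1) ^ card {u\<in>\<tau>. u < v} * c (insert v \<tau>))"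

definition kscale :: "'k::field \<Rightarrow> ('a set \<Rightarrow> 'k) \<Rightarrow> ('a set \<Rightarrow> 'k)" where
  "kscale a c = (\<lambda>\<sigma>. a * c \<sigma>)"

text \<open>Dimension of the reduced homology in degree j-1:
  dim (ker \<partial>_j) - dim (im \<partial>_{j+1}) (the image is contained in the kernel).\<close>
definition red_betti :: "'k::field itself \<Rightarrow> ('a::linorder) set \<Rightarrow> ('a \<Rightarrow> 'a \<Rightarrow> bool) \<Rightarrow> nat \<Rightarrow> nat" where
  "red_betti K V E j =
     vector_space.dim (kscale :: 'k \<Rightarrow> _ \<Rightarrow> 'a set \<Rightarrow> 'k)
        {c \<in> chains K V E j. bdry V c = 0}
   - vector_space.dim (kscale :: 'k \<Rightarrow> _) (bdry V ` chains K V E (Suc j))"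

text \<open>Total reduced Betti number over 'k: sum over all degrees -1 .. |V|-1.\<close>
definition total_betti :: "'k::field itself \<Rightarrow> ('a::linorder) set \<Rightarrow> ('a \<Rightarrow> 'a \<Rightarrow> bool) \<Rightarrow> nat" where
  "total_betti K V E = (\<Sum>j\<in>{0..card V}. red_betti K V E j)"

end

theory Submission
  imports Defs
begin


context vector_space begin

lemma fd_basis:
  assumes "S \<subseteq> span F" "finite F"
  obtains B where "B \<subseteq> S" "independent B" "S \<subseteq> span B" "card B = dim S" "finite B"
proof -
  obtain B where B: "B \<subseteq> S" "independent B" "S \<subseteq> span B" "card B = dim S"
    using basis_exists by blast
  have "finite B" using independent_span_bound[OF assms(2) B(2)] B(1) assms(1) by blast
  with B that show ?thesis by blast
qed

lemma dim_mono_fd: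
  assumes "S \<subseteq> span T" "T \<subseteq> span F" "finite F"
  shows "dim S \<le> dim T"
proof -
  obtain B where B: "B \<subseteq> T" "independent B" "T \<subseteq> span B" "card B = dim T" "finite B"
    using fd_basis[OF assms(2,3)] by blast
  have "span T \<subseteq> span B" using B(3) by (metis span_mono span_span)
  hence "S \<subseteq> span B" using assms(1) by blast
  thus ?thesis using dim_le_card[OF _ B(5)] B(4) by simp
qed

lemma rank_nullity_fd:
  assumes S: "subspace S" "S \<subseteq> span F" "finite F" and f: "module_hom scale scale f"
  shows "dim S = dim {x\<in>S. f x = 0} + dim (f ` S)"
proof -
  interpret f: module_hom scale scale f by fact
  let ?K = "{x\<in>S. f x = 0}"
  have KS: "?K \<subseteq> S" by blast
  have subK: "subspace ?K"
    using subspace_inter[OF S(1) f.subspace_kernel] by (simp add: Int_def conj_commute)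
  obtain B0 where B0: "B0 \<subseteq> ?K" "independent B0" "?K \<subseteq> span B0" "card B0 = dim ?K" "finite B0"
    using fd_basis[of ?K F] S KS by blast
  have ge: "dim ?K + dim (f ` S) \<le> dim S"
  proof -
    obtain B where B: "B0 \<subseteq> B" "B \<subseteq> S" "independent B" "S \<subseteq> span B"
      using maximal_independent_subset_extend[of B0 S] B0 by blast
    have fB: "finite B" using independent_span_bound[OF S(3) B(3)] B(2) S(2) by blast
    have cB: "card B = dim S" using basis_card_eq_dim[OF B(2) B(4) B(3)] .
    have "f ` S \<subseteq> span (f ` B)" using f.spans_image[OF B(4)] .
    also have "f ` B \<subseteq> insert 0 (f ` (B - B0))" using B0(1) by auto
    hence "span (f ` B) \<subseteq> span (f ` (B - B0))"
      by (metis span_insert_0 span_mono)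
    finally have "dim (f ` S) \<le> card (f ` (B - B0))"
      using dim_le_card fB by blast
    also have "\<dots> \<le> card (B - B0)" using fB by (simp add: card_image_le)
    also have "\<dots> = card B - card B0" using B(1) fB by (meson card_Diff_subset finite_subset)
    finally show ?thesis using cB B0(4) card_mono[OF fB B(1)] by linarith
  qed
  have le: "dim S \<le> dim ?K + dim (f ` S)"
  proof -
    have fS: "f ` S \<subseteq> span (f ` F)" using f.spans_image[OF S(2)] .
    obtain C where C: "C \<subseteq> f ` S" "independent C" "f ` S \<subseteq> span C" "card C = dim (f ` S)" "finite C"
      using fd_basis[OF fS] S(3) by blast
    have "\<forall>c\<in>C. \<exists>y\<in>S. f y = c" using C(1) by blast
    then obtain p where p: "\<And>c. c \<in> C \<Longrightarrow> p c \<in> S \<and> f (p c) = c" by metis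
    let ?P = "p ` C"
    have PS: "?P \<subseteq> S" using p by auto
    have fP: "f ` ?P = C" using p by (force simp: image_image)
    have spPS: "span ?P \<subseteq> S" using span_minimal[OF PS S(1)] .
    have "S \<subseteq> span (B0 \<union> ?P)"
    proof
      fix x assume x: "x \<in> S"
      have "f x \<in> span C" using C(3) x by blast
      hence "f x \<in> f ` span ?P" using f.span_image fP by metis
      then obtain y where y: "y \<in> span ?P" "f y = f x" by auto
      have "x - y \<in> ?K" using x y spPS S(1) by (auto simp: f.diff subspace_diff)
      hence "x - y \<in> span (B0 \<union> ?P)" using B0(3) span_mono[of B0 "B0 \<union> ?P"] by blast
      moreover have "y \<in> span (B0 \<union> ?P)" using y(1) span_mono[of ?P "B0 \<union> ?P"] by blast
      ultimately have "(x - y) + y \<in> span (B0 \<union> ?P)" by (rule span_add)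
      thus "x \<in> span (B0 \<union> ?P)" by simp
    qed
    hence "dim S \<le> card (B0 \<union> ?P)" using dim_le_card B0(5) C(5) by blast
    also have "\<dots> \<le> card B0 + card ?P" by (rule card_Un_le)
    also have "\<dots> \<le> card B0 + card C" using card_image_le[OF C(5)] by simp
    finally show ?thesis using B0(4) C(4) by simp
  qed
  from ge le show ?thesis by linarith
qed

lemma dim_image_le_fd:
  assumes "S \<subseteq> span F" "finite F" "module_hom scale scale f"
  shows "dim (f ` S) \<le> dim S"
proof -
  interpret f: module_hom scale scale f by fact
  obtain B where B: "B \<subseteq> S" "independent B" "S \<subseteq> span B" "card B = dim S" "finite B"
    using fd_basis[OF assms(1,2)] by blast
  have "f ` S \<subseteq> span (f ` B)" using f.spans_image[OF B(3)] .
  hence "dim (f ` S) \<le> card (f ` B)" using dim_le_card B(5) by blast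
  also have "\<dots> \<le> card B" using B(5) card_image_le by blast
  finally show ?thesis using B(4) by simp
qed

end

lemma vs_kscale: "vector_space (kscale :: 'k::field \<Rightarrow> ('b set \<Rightarrow> 'k) \<Rightarrow> ('b set \<Rightarrow> 'k))"
  by unfold_locales (auto simp: kscale_def fun_eq_iff algebra_simps)

interpretation ks: vector_space "kscale :: 'k::field \<Rightarrow> ('b set \<Rightarrow> 'k) \<Rightarrow> ('b set \<Rightarrow> 'k)"
  by (rule vs_kscale)



lemma sum_fun_apply: "(sum f A) x = (\<Sum>a\<in>A. f a x)"
  by (induct A rule: infinite_finite_induct) auto

definition faces :: "'a set \<Rightarrow> ('a \<Rightarrow> 'a \<Rightarrow> bool) \<Rightarrow> nat \<Rightarrow> 'a set set" where
  "faces V E j = {\<sigma>. ind_face V E \<sigma> \<and> card \<sigma> = j}"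

definition delta :: "'a set \<Rightarrow> 'a set \<Rightarrow> 'k::field" where
  "delta \<sigma> = (\<lambda>\<tau>. if \<tau> = \<sigma> then 1 else 0)"

lemma finite_faces: "finite V \<Longrightarrow> finite (faces V E j)"
  by (rule finite_subset[of _ "Pow V"]) (auto simp: faces_def ind_face_def)

lemma chains_span:
  fixes K :: "'k::field itself"
  assumes "finite V"
  shows "chains K V E j \<subseteq> ks.span ((delta :: _ \<Rightarrow> _ \<Rightarrow> 'k) ` faces V E j)"
proof
  fix c :: "'a set \<Rightarrow> 'k" assume c: "c \<in> chains K V E j"
  have eq: "c = (\<Sum>\<sigma>\<in>faces V E j. kscale (c \<sigma>) (delta \<sigma>))"
  proof
    fix \<tau>
    have "(\<Sum>\<sigma>\<in>faces V E j. kscale (c \<sigma>) (delta \<sigma>)) \<tau> = (\<Sum>\<sigma>\<in>faces V E j. c \<sigma> * delta \<sigma> \<tau>)"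
      by (simp add: sum_fun_apply kscale_def)
    also have "\<dots> = (if \<tau> \<in> faces V E j then c \<tau> else 0)"
    proof -
      have "(\<Sum>\<sigma>\<in>faces V E j. c \<sigma> * delta \<sigma> \<tau>) = (\<Sum>\<sigma>\<in>faces V E j. if \<sigma> = \<tau> then c \<tau> else 0)"
        by (rule sum.cong) (auto simp: delta_def)
      also have "\<dots> = (if \<tau> \<in> faces V E j then c \<tau> else 0)"
        using finite_faces[OF assms] by (simp add: sum.delta)
      finally show ?thesis .
    qed
    also have "\<dots> = c \<tau>" using c by (auto simp: chains_def faces_def)
    finally show "c \<tau> = (\<Sum>\<sigma>\<in>faces V E j. kscale (c \<sigma>) (delta \<sigma>)) \<tau>" by simp
  qed
  show "c \<in> ks.span (delta ` faces V E j)"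
    by (subst eq, intro ks.span_sum ks.span_scale ks.span_base) auto
qed

lemma chains_subspace: "ks.subspace (chains K V E j)"
  unfolding ks.subspace_def chains_def kscale_def
  by (auto, metis add.left_neutral add.right_neutral, metis add.left_neutral add.right_neutral)

lemma bdry_add: "bdry V (c + d) = bdry V c + bdry V d"
  unfolding bdry_def fun_eq_iff plus_fun_apply
  by (simp add: sum.distrib distrib_left)

lemma bdry_scale: "bdry V (kscale a c) = kscale a (bdry V c)"
  unfolding bdry_def kscale_def fun_eq_iff
  by (simp add: sum_distrib_left mult.left_commute)

lemma bdry_hom: "module_hom kscale kscale (bdry V)"
  unfolding module_hom_iff using ks.module_axioms bdry_add bdry_scale by blast

lemma red_betti_eq:
  fixes K :: "'k::field itself"
  assumes "finite V"
  shows "red_betti K V E j =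
     (ks.dim (chains K V E j) - ks.dim (bdry V ` chains K V E j)) - ks.dim (bdry V ` chains K V E (Suc j))"
proof -
  have "ks.dim (chains K V E j) = ks.dim {c\<in>chains K V E j. bdry V c = 0} + ks.dim (bdry V ` chains K V E j)"
    by (rule ks.rank_nullity_fd[OF chains_subspace chains_span[OF assms] finite_imageI[OF finite_faces[OF assms]] bdry_hom])
  thus ?thesis unfolding red_betti_def by simp
qed



definition sg :: "'a::linorder \<Rightarrow> 'a set \<Rightarrow> 'k::field" where
  "sg x \<sigma> = (-1) ^ card {u\<in>\<sigma>. u < x}"

definition Kc :: "'a::linorder \<Rightarrow> ('a set \<Rightarrow> 'k::field) \<Rightarrow> 'a set \<Rightarrow> 'k" where
  "Kc x c = (\<lambda>\<sigma>. if x \<in> \<sigma> then sg x \<sigma> * c (\<sigma> - {x}) else 0)"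

lemma neg1_sq: "(-1::'k::field) ^ a * (-1) ^ a = 1"
  by (simp add: power_mult_distrib[symmetric])

lemma homotopy_out:
  fixes c :: "'a::linorder set \<Rightarrow> 'k::field"
  assumes "finite V" "x \<in> V" "x \<notin> \<tau>"
  shows "bdry V (Kc x c) \<tau> + Kc x (bdry V c) \<tau> = c \<tau>"
proof -
  have "bdry V (Kc x c) \<tau> = (\<Sum>v\<in>V - \<tau>. if v = x then (-1) ^ card {u\<in>\<tau>. u < x} * (sg x (insert x \<tau>) * c \<tau>) else 0)"
    unfolding bdry_def
    by (rule sum.cong) (use assms in \<open>auto simp: Kc_def\<close>)
  also have "\<dots> = (-1) ^ card {u\<in>\<tau>. u < x} * (sg x (insert x \<tau>) * c \<tau>)"
    using assms by (simp add: sum.delta')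
  also have "sg x (insert x \<tau>) = ((-1) ^ card {u\<in>\<tau>. u < x} :: 'k)"
    unfolding sg_def by (rule arg_cong[where f="\<lambda>S. (-1) ^ card S"]) auto
  finally show ?thesis using assms
    by (simp add: Kc_def mult.assoc[symmetric] neg1_sq)
qed

lemma homotopy_in:
  assumes "finite V" "x \<in> V" "x \<in> \<tau>" and fin: "\<And>\<sigma>. c \<sigma> \<noteq> 0 \<Longrightarrow> finite \<sigma>"
  shows "bdry V (Kc x c) \<tau> + Kc x (bdry V c) \<tau> = (c \<tau> :: 'k::field)"
proof -
  define \<rho> where "\<rho> = \<tau> - {x}"
  have xr: "x \<notin> \<rho>" and tr: "\<tau> = insert x \<rho>" using assms by (auto simp: \<rho>_def)
  have sgt: "sg x \<tau> = ((-1) ^ card {u\<in>\<rho>. u < x} :: 'k)"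
    unfolding sg_def by (rule arg_cong[where f="\<lambda>S. (-1) ^ card S"]) (auto simp: \<rho>_def)
  have Vr: "V - \<rho> = insert x (V - \<tau>)" using assms by (auto simp: \<rho>_def)
  have "Kc x (bdry V c) \<tau> = sg x \<tau> * (\<Sum>v\<in>insert x (V - \<tau>). (-1) ^ card {u\<in>\<rho>. u < v} * c (insert v \<rho>))"
    using assms by (simp add: Kc_def bdry_def Vr[symmetric] \<rho>_def)
  also have "\<dots> = sg x \<tau> * ((-1) ^ card {u\<in>\<rho>. u < x} * c \<tau>) +
      (\<Sum>v\<in>V - \<tau>. sg x \<tau> * ((-1) ^ card {u\<in>\<rho>. u < v} * c (insert v \<rho>)))"
    using assms tr by (simp add: sum_distrib_left distrib_left)
  also have "sg x \<tau> * ((-1) ^ card {u\<in>\<rho>. u < x} * c \<tau>) = c \<tau>"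
    by (simp add: sgt mult.assoc[symmetric] neg1_sq)
  finally have K1: "Kc x (bdry V c) \<tau> = c \<tau> +
      (\<Sum>v\<in>V - \<tau>. sg x \<tau> * ((-1) ^ card {u\<in>\<rho>. u < v} * c (insert v \<rho>)))" .
  have K2: "bdry V (Kc x c) \<tau> =
      (\<Sum>v\<in>V - \<tau>. (-1) ^ card {u\<in>\<tau>. u < v} * (sg x (insert v \<tau>) * c (insert v \<rho>)))"
    unfolding bdry_def
    by (rule sum.cong) (use assms in \<open>auto simp: Kc_def \<rho>_def insert_Diff_if\<close>)
  have term0: "(-1) ^ card {u\<in>\<tau>. u < v} * (sg x (insert v \<tau>) * c (insert v \<rho>)) +
      sg x \<tau> * ((-1) ^ card {u\<in>\<rho>. u < v} * c (insert v \<rho>)) = 0"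
    if v: "v \<in> V - \<tau>" for v
  proof (cases "finite \<tau>")
    case False
    hence "c (insert v \<rho>) = 0" using fin tr by (metis finite_insert)
    thus ?thesis by simp
  next
    case True
    hence fr: "finite \<rho>" by (simp add: \<rho>_def)
    have vx: "v \<noteq> x" "v \<notin> \<rho>" using v assms by (auto simp: \<rho>_def)
    define a where "a = card {u\<in>\<rho>. u < v}"
    define b where "b = card {u\<in>\<rho>. u < x}"
    have c1: "card {u\<in>\<tau>. u < v} = a + (if x < v then 1 else 0)"
    proof -
      have "{u\<in>\<tau>. u < v} = (if x < v then insert x {u\<in>\<rho>. u < v} else {u\<in>\<rho>. u < v})"
        using tr by auto
      thus ?thesis using fr xr by (simp add: a_def)
    qed
    have c2: "card {u\<in>insert v \<tau>. u < x} = b + (if v < x then 1 else 0)"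
    proof -
      have "{u\<in>insert v \<tau>. u < x} = (if v < x then insert v {u\<in>\<rho>. u < x} else {u\<in>\<rho>. u < x})"
        using tr by auto
      thus ?thesis using fr vx by (simp add: b_def)
    qed
    have s1: "sg x (insert v \<tau>) = ((-1) ^ (b + (if v < x then 1 else 0)) :: 'k)"
      by (simp only: sg_def c2)
    have s2: "((-1) ^ card {u\<in>\<tau>. u < v} :: 'k) = (-1) ^ (a + (if x < v then 1 else 0))"
      by (simp only: c1)
    have s3: "sg x \<tau> = ((-1) ^ b :: 'k)" using sgt b_def by simp
    have "v < x \<or> x < v" using vx by auto
    thus ?thesis unfolding s1 s2 s3 a_def[symmetric]
      by (elim disjE) (auto simp: power_add algebra_simps)
  qed
  show ?thesis
    unfolding K1 K2 using term0
    by (simp add: add.assoc[symmetric] sum.distrib[symmetric] add.commute[of "c \<tau>"])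
qed

lemma homotopy:
  assumes "finite V" "x \<in> V" "\<And>\<sigma>. c \<sigma> \<noteq> 0 \<Longrightarrow> finite \<sigma>"
  shows "bdry V (Kc x c) + Kc x (bdry V c) = (c :: 'a::linorder set \<Rightarrow> 'k::field)"
  using homotopy_in[OF assms(1,2) _ assms(3)] homotopy_out[OF assms(1,2)]
  by (auto simp: fun_eq_iff)



lemma bdry_restrict:
  assumes "finite V" "W \<subseteq> V" "\<And>\<sigma>. c \<sigma> \<noteq> 0 \<Longrightarrow> \<sigma> \<subseteq> W"
  shows "bdry V c = bdry W c"
proof
  fix \<tau>
  show "bdry V c \<tau> = bdry W c \<tau>"
    unfolding bdry_def
    by (rule sum.mono_neutral_right) (use assms in \<open>auto\<close>)
qed

lemma chains_supp: "c \<in> chains K V E j \<Longrightarrow> c \<sigma> \<noteq> 0 \<Longrightarrow> \<sigma> \<subseteq> V"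
  by (auto simp: chains_def ind_face_def)

lemma chains_fin: "finite V \<Longrightarrow> c \<in> chains K V E j \<Longrightarrow> c \<sigma> \<noteq> 0 \<Longrightarrow> finite \<sigma>"
  by (meson chains_supp finite_subset)

lemma chains_mono: "W \<subseteq> V \<Longrightarrow> chains K W E j \<subseteq> chains K V E j"
  unfolding chains_def ind_face_def by blast

definition hx :: "'a::linorder \<Rightarrow> ('a set \<Rightarrow> 'k::field) \<Rightarrow> 'a set \<Rightarrow> 'k" where
  "hx x e = (\<lambda>\<rho>. if x \<notin> \<rho> then sg x (insert x \<rho>) * e (insert x \<rho>) else 0)"

lemma hx_hom: "module_hom kscale kscale (hx x)"
  unfolding module_hom_iff
  by (auto simp: ks.module_axioms hx_def kscale_def fun_eq_iff algebra_simps)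

lemma Kc_hom: "module_hom kscale kscale (Kc x)"
  unfolding module_hom_iff
  by (auto simp: ks.module_axioms Kc_def kscale_def fun_eq_iff algebra_simps)

lemma hx_Kc: "hx x (Kc x e) = (\<lambda>\<rho>. if x \<notin> \<rho> then e \<rho> else 0)"
  by (auto simp: fun_eq_iff hx_def Kc_def mult.assoc[symmetric] sg_def neg1_sq)

lemma Kc_hx: "Kc x (hx x c) = (\<lambda>\<sigma>. if x \<in> \<sigma> then c \<sigma> else 0)"
  by (auto simp: fun_eq_iff hx_def Kc_def mult.assoc[symmetric] sg_def neg1_sq insert_absorb)

context
  fixes K :: "'k::field itself" and V :: "'a::linorder set" and E :: "'a \<Rightarrow> 'a \<Rightarrow> bool" and x :: 'a
  assumes finV: "finite V" and xV: "x \<in> V"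
    and sym: "\<And>a b. E a b \<Longrightarrow> E b a" and irr: "\<And>a. \<not> E a a"
begin

abbreviation "Wr \<equiv> V - insert x {y. E x y}"

lemma hx_bdry_A: "c \<in> chains K (V - {x}) E j \<Longrightarrow> hx x (bdry V c) = 0"
  by (auto simp: fun_eq_iff hx_def bdry_def dest!: chains_supp intro!: sum.neutral)

lemma Kc_chains: "d \<in> chains K Wr E j \<Longrightarrow> Kc x d \<in> chains K V E (Suc j)"
proof -
  assume d: "d \<in> chains K Wr E j"
  show ?thesis unfolding chains_def
  proof (intro CollectI allI impI)
    fix \<sigma> assume "Kc x d \<sigma> \<noteq> 0"
    hence x\<sigma>: "x \<in> \<sigma>" and nz: "d (\<sigma> - {x}) \<noteq> 0" by (auto simp: Kc_def split: if_splits)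
    hence f: "ind_face Wr E (\<sigma> - {x})" "card (\<sigma> - {x}) = j" using d by (auto simp: chains_def)
    have sub: "\<sigma> - {x} \<subseteq> Wr" and ind: "\<forall>a\<in>\<sigma> - {x}. \<forall>b\<in>\<sigma> - {x}. \<not> E a b"
      using f(1) unfolding ind_face_def by blast+
    have fin: "finite (\<sigma> - {x})" using sub finV by (meson Diff_subset finite_subset subset_trans)
    have "\<sigma> \<subseteq> V" using sub x\<sigma> xV by blast
    moreover have "\<forall>a\<in>\<sigma>. \<forall>b\<in>\<sigma>. \<not> E a b"
    proof (intro ballI)
      fix a b assume a: "a \<in> \<sigma>" and b: "b \<in> \<sigma>"
      show "\<not> E a b"
      proof (cases "a = x")
        case True
        thus ?thesis using b sub irr by (cases "b = x") auto
      next
        case False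
        thus ?thesis using a b sub ind sym by (cases "b = x") blast+
      qed
    qed
    ultimately have "ind_face V E \<sigma>" unfolding ind_face_def by blast
    moreover have "card \<sigma> = Suc j"
    proof -
      have "\<sigma> = insert x (\<sigma> - {x})" using x\<sigma> by blast
      hence "card \<sigma> = Suc (card (\<sigma> - {x}))" using fin by (metis card_insert_disjoint Diff_iff singletonI)
      thus ?thesis using f(2) by simp
    qed
    ultimately show "ind_face V E \<sigma> \<and> card \<sigma> = Suc j" by blast
  qed
qed

lemma hx_chains: "c \<in> chains K V E (Suc j) \<Longrightarrow> hx x c \<in> chains K Wr E j"
proof -
  assume c: "c \<in> chains K V E (Suc j)"
  show ?thesis unfolding chains_def
  proof (intro CollectI allI impI)
    fix \<rho> assume "hx x c \<rho> \<noteq> 0"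
    hence x\<rho>: "x \<notin> \<rho>" and nz: "c (insert x \<rho>) \<noteq> 0" by (auto simp: hx_def split: if_splits)
    hence f: "ind_face V E (insert x \<rho>)" "card (insert x \<rho>) = Suc j" using c by (auto simp: chains_def)
    have fin: "finite \<rho>" using f finV by (auto simp: ind_face_def intro: finite_subset)
    have "ind_face Wr E \<rho>" using f x\<rho> unfolding ind_face_def by auto
    moreover have "card \<rho> = j" using f fin x\<rho> by simp
    ultimately show "ind_face Wr E \<rho> \<and> card \<rho> = j" by blast
  qed
qed

lemma hx_bdry_Kc: "d \<in> chains K Wr E j \<Longrightarrow> hx x (bdry V (Kc x d)) = - bdry Wr d"
proof -
  assume d: "d \<in> chains K Wr E j"
  have hom: "bdry V (Kc x d) + Kc x (bdry V d) = d"
    by (rule homotopy[OF finV xV]) (use chains_fin[OF _ d] finV in auto)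
  have bVW: "bdry V d = bdry Wr d"
    by (rule bdry_restrict[OF finV]) (use chains_supp[OF d] in auto)
  interpret h: module_hom kscale kscale "hx x" by (rule hx_hom)
  have "hx x (bdry V (Kc x d)) = hx x d - hx x (Kc x (bdry V d))"
    using hom by (metis add_diff_cancel h.diff)
  also have "hx x d = 0"
    using chains_supp[OF d] by (auto simp: fun_eq_iff hx_def)
  also have "hx x (Kc x (bdry V d)) = bdry Wr d"
  proof -
    have nx: "d \<sigma> = 0" if "x \<in> \<sigma>" for \<sigma> using chains_supp[OF d, of \<sigma>] that by blast
    show ?thesis unfolding hx_Kc bVW
      by (auto simp: fun_eq_iff bdry_def nx intro!: sum.neutral)
  qed
  finally show ?thesis by (simp add: fun_eq_iff)
qed

lemma rank_block:
  "ks.dim (bdry V ` chains K V E (Suc j)) \<ge>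
     ks.dim (bdry (V - {x}) ` chains K (V - {x}) E (Suc j)) + ks.dim (bdry Wr ` chains K Wr E j)"
proof -
  let ?f = "bdry V" and ?C = "chains K V E (Suc j)" and ?A = "chains K (V - {x}) E (Suc j)"
  let ?D = "chains K Wr E j"
  let ?F = "?f ` ((delta :: _ \<Rightarrow> _ \<Rightarrow> 'k) ` faces V E (Suc j))"
  interpret f: module_hom kscale kscale ?f by (rule bdry_hom)
  interpret h: module_hom kscale kscale "hx x" by (rule hx_hom)
  have finF: "finite ?F" using finite_faces[OF finV] by simp
  have fCF: "?f ` ?C \<subseteq> ks.span ?F" using f.spans_image[OF chains_span[OF finV]] .
  have subfC: "ks.subspace (?f ` ?C)" by (rule f.subspace_image[OF chains_subspace])
  have rn: "ks.dim (?f ` ?C) = ks.dim {y\<in>?f ` ?C. hx x y = 0} + ks.dim (hx x ` ?f ` ?C)"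
    by (rule ks.rank_nullity_fd[OF subfC fCF finF hx_hom])
  have fA: "?f ` ?A = bdry (V - {x}) ` ?A"
    by (rule image_cong[OF refl], rule bdry_restrict[OF finV]) (auto dest: chains_supp)
  have "ks.dim (?f ` ?A) \<le> ks.dim {y\<in>?f ` ?C. hx x y = 0}"
  proof (rule ks.dim_mono_fd[OF _ _ finF])
    have "?f ` ?A \<subseteq> {y\<in>?f ` ?C. hx x y = 0}"
      using chains_mono[of "V - {x}" V K E "Suc j"] hx_bdry_A by blast
    thus "?f ` ?A \<subseteq> ks.span {y\<in>?f ` ?C. hx x y = 0}" using ks.span_superset by blast
    show "{y\<in>?f ` ?C. hx x y = 0} \<subseteq> ks.span ?F" using fCF by blast
  qed
  moreover have "ks.dim (bdry Wr ` ?D) \<le> ks.dim (hx x ` ?f ` ?C)"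
  proof (rule ks.dim_mono_fd[of _ _ "hx x ` ?F"])
    have "bdry Wr ` ?D \<subseteq> hx x ` ?f ` ?C"
    proof
      fix y assume "y \<in> bdry Wr ` ?D"
      then obtain d where d: "d \<in> ?D" "y = bdry Wr d" by blast
      have md: "- d \<in> ?D" using ks.subspace_neg[OF chains_subspace d(1)] .
      interpret g: module_hom kscale kscale "bdry Wr" by (rule bdry_hom)
      have "hx x (?f (Kc x (- d))) = y" using hx_bdry_Kc[OF md] d(2) by (simp add: g.neg)
      moreover have "Kc x (- d) \<in> ?C" by (rule Kc_chains[OF md])
      ultimately show "y \<in> hx x ` ?f ` ?C" by blast
    qed
    thus "bdry Wr ` ?D \<subseteq> ks.span (hx x ` ?f ` ?C)" using ks.span_superset by blast
    show "hx x ` ?f ` ?C \<subseteq> ks.span (hx x ` ?F)" using h.spans_image[OF fCF] .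
    show "finite (hx x ` ?F)" using finF by simp
  qed
  ultimately show ?thesis using rn fA by simp
qed

lemma dim_block:
  "ks.dim (chains K V E (Suc j)) \<le> ks.dim (chains K (V - {x}) E (Suc j)) + ks.dim (chains K Wr E j)"
proof -
  let ?C = "chains K V E (Suc j)" and ?A = "chains K (V - {x}) E (Suc j)"
  let ?D = "chains K Wr E j"
  interpret k: module_hom kscale kscale "Kc x :: _ \<Rightarrow> _ \<Rightarrow> 'k" by (rule Kc_hom)
  have fV': "finite (V - {x})" and fW: "finite Wr" using finV by auto
  obtain BA where BA: "BA \<subseteq> ?A" "ks.independent BA" "?A \<subseteq> ks.span BA" "card BA = ks.dim ?A" "finite BA"
    using ks.fd_basis[OF chains_span[OF fV'] finite_imageI[OF finite_faces[OF fV']]] by blast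
  obtain BD where BD: "BD \<subseteq> ?D" "ks.independent BD" "?D \<subseteq> ks.span BD" "card BD = ks.dim ?D" "finite BD"
    using ks.fd_basis[OF chains_span[OF fW] finite_imageI[OF finite_faces[OF fW]]] by blast
  have "?C \<subseteq> ks.span (BA \<union> Kc x ` BD)"
  proof
    fix c assume c: "c \<in> ?C"
    define r where "r = (\<lambda>\<sigma>. if x \<in> \<sigma> then 0 else c \<sigma>)"
    have dec: "c = r + Kc x (hx x c)" by (auto simp: fun_eq_iff r_def Kc_hx)
    have "r \<in> ?A" using c by (auto simp: r_def chains_def ind_face_def)
    hence "r \<in> ks.span (BA \<union> Kc x ` BD)" using BA(3) ks.span_mono[of BA "BA \<union> Kc x ` BD"] by blast
    moreover have "Kc x (hx x c) \<in> ks.span (BA \<union> Kc x ` BD)"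
    proof -
      have "hx x c \<in> ks.span BD" using hx_chains[OF c] BD(3) by blast
      hence "Kc x (hx x c) \<in> ks.span (Kc x ` BD)" using k.span_image by blast
      thus ?thesis using ks.span_mono[of "Kc x ` BD" "BA \<union> Kc x ` BD"] by blast
    qed
    ultimately show "c \<in> ks.span (BA \<union> Kc x ` BD)" by (subst dec) (rule ks.span_add)
  qed
  hence "ks.dim ?C \<le> card (BA \<union> Kc x ` BD)" using ks.dim_le_card BA(5) BD(5) by blast
  also have "\<dots> \<le> card BA + card (Kc x ` BD)" by (rule card_Un_le)
  also have "\<dots> \<le> card BA + card BD" using card_image_le[OF BD(5)] by simp
  finally show ?thesis using BA(4) BD(4) by simp
qed

lemma chains0_eq: "chains K (V - {x}) E 0 = chains K V E 0"
proof -
  have "ind_face V E \<sigma> \<and> card \<sigma> = 0 \<longleftrightarrow> ind_face (V - {x}) E \<sigma> \<and> card \<sigma> = 0" for \<sigma>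
  proof -
    have "ind_face V E \<sigma> \<Longrightarrow> finite \<sigma>" using finV by (auto simp: ind_face_def intro: finite_subset)
    moreover have "ind_face (V - {x}) E \<sigma> \<Longrightarrow> finite \<sigma>" using finV by (auto simp: ind_face_def intro: finite_subset)
    ultimately show ?thesis by (auto simp: ind_face_def)
  qed
  thus ?thesis unfolding chains_def by simp
qed

lemma betti0_le: "red_betti K V E 0 \<le> red_betti K (V - {x}) E 0"
proof -
  have fV': "finite (V - {x})" using finV by auto
  have e1: "bdry V ` chains K V E 0 = bdry (V - {x}) ` chains K (V - {x}) E 0"
    unfolding chains0_eq[symmetric]
    by (rule image_cong[OF refl], rule bdry_restrict[OF finV]) (auto dest: chains_supp)
  have "ks.dim (bdry V ` chains K V E (Suc 0)) \<ge> ks.dim (bdry (V - {x}) ` chains K (V - {x}) E (Suc 0))"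
    using rank_block[of 0] by simp
  thus ?thesis unfolding red_betti_eq[OF finV] red_betti_eq[OF fV'] e1 chains0_eq by linarith
qed

lemma bettiSuc_le:
  "red_betti K V E (Suc j) \<le> red_betti K (V - {x}) E (Suc j) + red_betti K Wr E j"
proof -
  have fV': "finite (V - {x})" and fW: "finite Wr" using finV by auto
  show ?thesis
    unfolding red_betti_eq[OF finV] red_betti_eq[OF fV'] red_betti_eq[OF fW]
    using dim_block[of j] rank_block[of j] rank_block[of "Suc j"] by linarith
qed

end



lemma betti_le_faces:
  fixes K :: "'k::field itself"
  assumes "finite V"
  shows "red_betti K V E j \<le> card (faces V E j)"
proof -
  have "ks.dim (chains K V E j) \<le> card ((delta :: _ \<Rightarrow> _ \<Rightarrow> 'k) ` faces V E j)"
    using ks.dim_le_card[OF chains_span[OF assms] finite_imageI[OF finite_faces[OF assms]]] .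
  also have "\<dots> \<le> card (faces V E j)" using card_image_le[OF finite_faces[OF assms]] .
  finally show ?thesis unfolding red_betti_eq[OF assms] by linarith
qed

lemma faces_big: "finite V \<Longrightarrow> card V < j \<Longrightarrow> faces V E j = {}"
  by (auto simp: faces_def ind_face_def dest: card_mono)

lemma total_ext:
  assumes "finite V" "card V < M"
  shows "total_betti K V E = (\<Sum>j<M. red_betti K V E j)"
proof -
  have "total_betti K V E = (\<Sum>j<Suc (card V). red_betti K V E j)"
    unfolding total_betti_def by (rule sum.cong) auto
  also have "\<dots> = (\<Sum>j<M. red_betti K V E j)"
  proof (rule sum.mono_neutral_left)
    show "\<forall>i\<in>{..<M} - {..<Suc (card V)}. red_betti K V E i = 0"
    proof
      fix i assume "i \<in> {..<M} - {..<Suc (card V)}"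
      hence "card V < i" by auto
      hence "faces V E i = {}" by (rule faces_big[OF assms(1)])
      thus "red_betti K V E i = 0" using betti_le_faces[OF assms(1), of K E i] by simp
    qed
  qed (use assms in auto)
  finally show ?thesis .
qed

lemma total_vertex_ineq:
  fixes K :: "'k::field itself" and V :: "'a::linorder set"
  assumes finV: "finite V" and xV: "x \<in> V"
    and sym: "\<And>a b. E a b \<Longrightarrow> E b a" and irr: "\<And>a. \<not> E a a"
  shows "total_betti K V E \<le> total_betti K (V - {x}) E + total_betti K (V - insert x {y. E x y}) E"
proof -
  let ?W = "V - insert x {y. E x y}" and ?V' = "V - {x}"
  define n where "n = card V"
  have n1: "n \<ge> 1" using finV xV by (auto simp: n_def Suc_le_eq card_gt_0_iff)
  have cV': "card ?V' < Suc n" by (metis card_Diff1_le le_imp_less_Suc n_def)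
  have cW: "card ?W < n"
  proof -
    have "?W \<subset> V" using xV by blast
    thus ?thesis using finV by (simp add: n_def psubset_card_mono)
  qed
  have "total_betti K V E = (\<Sum>j<Suc n. red_betti K V E j)"
    by (rule total_ext[OF finV]) (simp add: n_def)
  also have "\<dots> = red_betti K V E 0 + (\<Sum>j<n. red_betti K V E (Suc j))"
    by (simp only: sum.lessThan_Suc_shift)
  also have "\<dots> \<le> red_betti K ?V' E 0 + (\<Sum>j<n. red_betti K ?V' E (Suc j) + red_betti K ?W E j)"
  proof (intro add_mono sum_mono)
    show "red_betti K V E 0 \<le> red_betti K ?V' E 0"
      by (rule betti0_le) (use finV xV sym irr in auto)
    fix j show "red_betti K V E (Suc j) \<le> red_betti K ?V' E (Suc j) + red_betti K ?W E j"
      by (rule bettiSuc_le) (use finV xV sym irr in auto)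
  qed
  also have "\<dots> = (\<Sum>j<Suc n. red_betti K ?V' E j) + (\<Sum>j<n. red_betti K ?W E j)"
    by (simp only: sum.distrib sum.lessThan_Suc_shift add.assoc)
  also have "\<dots> = total_betti K ?V' E + total_betti K ?W E"
    using total_ext[OF _ cV', of K E] total_ext[OF _ cW, of K E] finV by simp
  finally show ?thesis .
qed

lemma total_isolated:
  fixes K :: "'k::field itself" and V :: "'a::linorder set"
  assumes finV: "finite V" and xV: "x \<in> V" and iso: "\<And>y. y \<in> V \<Longrightarrow> \<not> E x y"
    and sym: "\<And>a b. E a b \<Longrightarrow> E b a" and irr: "\<And>a. \<not> E a a"
  shows "total_betti K V E = 0"
proof -
  have Kc_ch: "Kc x c \<in> chains K V E (Suc j)" if c: "c \<in> chains K V E j" for c :: "_ \<Rightarrow> 'k" and j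
    unfolding chains_def
  proof (intro CollectI allI impI)
    fix \<sigma> assume "Kc x c \<sigma> \<noteq> 0"
    hence x\<sigma>: "x \<in> \<sigma>" and nz: "c (\<sigma> - {x}) \<noteq> 0" by (auto simp: Kc_def split: if_splits)
    hence f: "ind_face V E (\<sigma> - {x})" "card (\<sigma> - {x}) = j" using c by (auto simp: chains_def)
    have sub: "\<sigma> - {x} \<subseteq> V" and ind: "\<forall>a\<in>\<sigma> - {x}. \<forall>b\<in>\<sigma> - {x}. \<not> E a b"
      using f(1) unfolding ind_face_def by blast+
    have fin: "finite (\<sigma> - {x})" using sub finV by (meson finite_subset)
    have "\<sigma> \<subseteq> V" using sub x\<sigma> xV by blast
    moreover have "\<forall>a\<in>\<sigma>. \<forall>b\<in>\<sigma>. \<not> E a b"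
    proof (intro ballI)
      fix a b assume a: "a \<in> \<sigma>" and b: "b \<in> \<sigma>"
      show "\<not> E a b"
      proof (cases "a = x")
        case True
        thus ?thesis using b sub irr iso by (cases "b = x") auto
      next
        case False
        thus ?thesis using a b sub ind sym iso by (cases "b = x") blast+
      qed
    qed
    ultimately have "ind_face V E \<sigma>" unfolding ind_face_def by blast
    moreover have "card \<sigma> = Suc j"
    proof -
      have "\<sigma> = insert x (\<sigma> - {x})" using x\<sigma> by blast
      hence "card \<sigma> = Suc (card (\<sigma> - {x}))" using fin by (metis card_insert_disjoint Diff_iff singletonI)
      thus ?thesis using f(2) by simp
    qed
    ultimately show "ind_face V E \<sigma> \<and> card \<sigma> = Suc j" by blast
  qed
  have "red_betti K V E j = 0" for j
  proof -
    let ?Z = "{c \<in> chains K V E j. bdry V c = 0}"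
    let ?B = "bdry V ` chains K V E (Suc j)"
    interpret k: module_hom kscale kscale "Kc x :: _ \<Rightarrow> _ \<Rightarrow> 'k" by (rule Kc_hom)
    have "?Z \<subseteq> ?B"
    proof
      fix z assume z: "z \<in> ?Z"
      have "bdry V (Kc x z) + Kc x (bdry V z) = z"
        by (rule homotopy[OF finV xV]) (use chains_fin[OF finV] z in blast)
      hence "z = bdry V (Kc x z)" using z by simp
      thus "z \<in> ?B" using Kc_ch z by blast
    qed
    hence "ks.dim ?Z \<le> ks.dim ?B"
    proof (intro ks.dim_mono_fd[of _ _ "bdry V ` (delta :: _ \<Rightarrow> _ \<Rightarrow> 'k) ` faces V E (Suc j)"])
      show "?Z \<subseteq> ks.span ?B" if "?Z \<subseteq> ?B" using that ks.span_superset by blast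
      show "?B \<subseteq> ks.span (bdry V ` delta ` faces V E (Suc j))"
        using module_hom.spans_image[OF bdry_hom chains_span[OF finV]] .
    qed (use finite_faces[OF finV] in auto)
    thus ?thesis unfolding red_betti_def by simp
  qed
  thus ?thesis unfolding total_betti_def by simp
qed

lemma total_empty: "total_betti K {} E \<le> 1"
proof -
  have "faces {} E 0 = {{}}" by (auto simp: faces_def ind_face_def)
  hence "red_betti K {} E 0 \<le> 1" using betti_le_faces[of "{}" K E 0] by simp
  thus ?thesis unfolding total_betti_def by simp
qed



lemma tf_sub: "W \<subseteq> V \<Longrightarrow> triangle_free V E \<Longrightarrow> triangle_free W E"
  unfolding triangle_free_def by blast

lemma td_sub: "W \<subseteq> V \<Longrightarrow> two_degenerate V E \<Longrightarrow> two_degenerate W E"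
  unfolding two_degenerate_def by (meson order_trans)

lemma main_bound:
  fixes K :: "'k::field itself" and E :: "'a::linorder \<Rightarrow> 'a \<Rightarrow> bool" and \<Gamma> :: real
  assumes sym: "\<And>a b. E a b \<Longrightarrow> E b a" and irr: "\<And>a. \<not> E a a"
    and G1: "1 \<le> \<Gamma>" and G4: "\<Gamma> ^ 4 = \<Gamma> + 1"
  shows "finite W \<Longrightarrow> triangle_free W E \<Longrightarrow> two_degenerate W E \<Longrightarrow>
         real (total_betti K W E) \<le> \<Gamma> ^ card W"
proof (induction "card W" arbitrary: W rule: less_induct)
  case less
  note fin = less.prems(1) and tf = less.prems(2) and td = less.prems(3)
  define n where "n = card W"
  have IH: "real (total_betti K U E) \<le> \<Gamma> ^ card U" if "U \<subseteq> W" "card U < n" for U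
  proof -
    have "finite U" by (rule finite_subset[OF that(1) fin])
    thus ?thesis using less.hyps[of U] that tf_sub[OF that(1) tf] td_sub[OF that(1) td]
      unfolding n_def by simp
  qed
  have mono: "\<Gamma> ^ a \<le> \<Gamma> ^ b" if "a \<le> b" for a b using power_increasing[OF that G1] .
  have Gpos: "0 \<le> \<Gamma> ^ m" for m using G1 by simp
  show ?case
  proof (cases "W = {}")
    case True
    thus ?thesis using total_empty[of K E] by simp
  next
    case Wne: False
    show ?thesis
    proof (cases "\<exists>x\<in>W. \<forall>y\<in>W. \<not> E x y")
      case True
      then obtain x where x: "x \<in> W" "\<And>y. y \<in> W \<Longrightarrow> \<not> E x y" by blast
      have "total_betti K W E = 0"
        by (rule total_isolated[OF fin x(1)]) (use x in blast, rule sym, assumption, rule irr)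
      thus ?thesis using Gpos by simp
    next
      case noiso: False
      show ?thesis
      proof (cases "\<exists>v\<in>W. \<exists>u\<in>W. E v u \<and> (\<forall>y\<in>W. E v y \<longrightarrow> y = u)")
        case True
        then obtain v u where vu: "v \<in> W" "u \<in> W" "E v u" "\<And>y. y \<in> W \<Longrightarrow> E v y \<Longrightarrow> y = u" by blast
        have vneu: "v \<noteq> u" using vu irr by blast
        have t: "total_betti K W E \<le> total_betti K (W - {u}) E + total_betti K (W - insert u {y. E u y}) E"
          by (rule total_vertex_ineq[OF fin vu(2)]) (rule sym, assumption, rule irr)
        have z: "total_betti K (W - {u}) E = 0"
        proof (rule total_isolated[where x=v])
          show "v \<in> W - {u}" using vu(1) vneu by auto
          show "\<And>y. y \<in> W - {u} \<Longrightarrow> \<not> E v y" using vu(4) by blast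
        qed (use fin in simp, rule sym, assumption, rule irr)
        have "card (W - insert u {y. E u y}) < n"
        proof -
          have "W - insert u {y. E u y} \<subset> W" using vu by blast
          thus ?thesis using fin by (simp add: n_def psubset_card_mono)
        qed
        hence "real (total_betti K (W - insert u {y. E u y}) E) \<le> \<Gamma> ^ card (W - insert u {y. E u y})"
          by (intro IH) auto
        also have "\<dots> \<le> \<Gamma> ^ n" by (rule mono) (unfold n_def, rule card_mono[OF fin], blast)
        finally show ?thesis using t z by (simp add: n_def)
      next
        case no1: False
        obtain v where v: "v \<in> W" "card {u\<in>W. E v u} \<le> 2"
          using td Wne unfolding two_degenerate_def by blast
        have nb: "\<exists>y\<in>W. E a y \<and> y \<noteq> b" if "a \<in> W" "b \<in> W" "E a b" for a b
          using no1 that by blast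
        obtain u where u: "u \<in> W" "E v u" using noiso v by blast
        obtain w where w: "w \<in> W" "E v w" "w \<noteq> u" using nb[OF v(1) u] by blast
        have only: "y = u \<or> y = w" if "y \<in> W" "E v y" for y
        proof (rule ccontr)
          assume "\<not> (y = u \<or> y = w)"
          hence "card {u, w, y} = 3" using w by auto
          moreover have "{u, w, y} \<subseteq> {u\<in>W. E v u}" using u w that by auto
          moreover have "finite {u\<in>W. E v u}" using fin by simp
          ultimately have "3 \<le> card {u\<in>W. E v u}" by (metis card_mono)
          thus False using v by simp
        qed
        have nuw: "\<not> E u w" using tf v(1) u w unfolding triangle_free_def by blast
        have uv: "u \<noteq> v" "w \<noteq> v" using u w irr by metis+
        obtain u' where u': "u' \<in> W" "E u u'" "u' \<noteq> v" using nb[OF u(1) v(1) sym[OF u(2)]] by blast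
        obtain w' where w': "w' \<in> W" "E w w'" "w' \<noteq> v" using nb[OF w(1) v(1) sym[OF w(2)]] by blast
        have u'u: "u' \<noteq> u" using u' irr by metis
        have w'w: "w' \<noteq> w" "w' \<noteq> u" using w' irr nuw sym by metis+
        have t1: "total_betti K W E \<le> total_betti K (W - {u}) E + total_betti K (W - insert u {y. E u y}) E"
          by (rule total_vertex_ineq[OF fin u(1)]) (rule sym, assumption, rule irr)
        have c1: "card (W - insert u {y. E u y}) \<le> n - 3"
        proof -
          have sub: "W - insert u {y. E u y} \<subseteq> W - {u, v, u'}" using u' sym[OF u(2)] by auto
          have "card (W - {u, v, u'}) = n - 3"
            using u v u' u'u uv fin by (subst card_Diff_subset) (auto simp: n_def)
          thus ?thesis using card_mono[OF _ sub] fin by simp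
        qed
        have b1: "real (total_betti K (W - insert u {y. E u y}) E) \<le> \<Gamma> ^ (n - 3)"
        proof -
          have "card (W - insert u {y. E u y}) < n"
          proof -
            have "W - insert u {y. E u y} \<subset> W" using u by blast
            thus ?thesis using fin by (simp add: n_def psubset_card_mono)
          qed
          hence "real (total_betti K (W - insert u {y. E u y}) E) \<le> \<Gamma> ^ card (W - insert u {y. E u y})"
            by (intro IH) auto
          also have "\<dots> \<le> \<Gamma> ^ (n - 3)" by (rule mono[OF c1])
          finally show ?thesis .
        qed
        let ?W1 = "W - {u}"
        have fin1: "finite ?W1" using fin by simp
        have wW1: "w \<in> ?W1" using w by auto
        have t2: "total_betti K ?W1 E \<le> total_betti K (?W1 - {w}) E + total_betti K (?W1 - insert w {y. E w y}) E"
          by (rule total_vertex_ineq[OF fin1 wW1]) (rule sym, assumption, rule irr)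
        have z2: "total_betti K (?W1 - {w}) E = 0"
        proof (rule total_isolated[where x=v])
          show "v \<in> ?W1 - {w}" using v uv by auto
          show "\<And>y. y \<in> ?W1 - {w} \<Longrightarrow> \<not> E v y" using only by blast
        qed (use fin in simp, rule sym, assumption, rule irr)
        have four: "card {u, v, w, w'} = 4" using uv w w'w w' by auto
        have n4: "4 \<le> n"
        proof -
          have "{u, v, w, w'} \<subseteq> W" using u v w w' by auto
          thus ?thesis using four card_mono[OF fin] by (metis n_def)
        qed
        have c2: "card (?W1 - insert w {y. E w y}) \<le> n - 4"
        proof -
          have sub: "?W1 - insert w {y. E w y} \<subseteq> W - {u, v, w, w'}" using w' sym[OF w(2)] by auto
          have "card (W - {u, v, w, w'}) = n - 4"
            using u v w w' four fin by (subst card_Diff_subset) (auto simp: n_def)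
          thus ?thesis using card_mono[OF _ sub] fin by simp
        qed
        have b2: "real (total_betti K (?W1 - insert w {y. E w y}) E) \<le> \<Gamma> ^ (n - 4)"
        proof -
          have "card (?W1 - insert w {y. E w y}) < n" using c2 n4 by linarith
          hence "real (total_betti K (?W1 - insert w {y. E w y}) E) \<le> \<Gamma> ^ card (?W1 - insert w {y. E w y})"
            by (intro IH) auto
          also have "\<dots> \<le> \<Gamma> ^ (n - 4)" by (rule mono[OF c2])
          finally show ?thesis .
        qed
        have "real (total_betti K W E) \<le> \<Gamma> ^ (n - 3) + \<Gamma> ^ (n - 4)"
          using t1 t2 z2 b1 b2 by linarith
        also have "\<Gamma> ^ (n - 3) + \<Gamma> ^ (n - 4) = \<Gamma> ^ (n - 4) * (\<Gamma> + 1)"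
        proof -
          have "n - 3 = Suc (n - 4)" using n4 by arith
          thus ?thesis by (simp add: algebra_simps)
        qed
        also have "\<dots> = \<Gamma> ^ n"
        proof -
          have "n = (n - 4) + 4" using n4 by arith
          hence "\<Gamma> ^ n = \<Gamma> ^ (n - 4) * \<Gamma> ^ 4" by (metis power_add)
          thus ?thesis using G4 by simp
        qed
        finally show ?thesis by (simp add: n_def)
      qed
    qed
  qed
qed

theorem proposition6p4:
  fixes V :: "'a::linorder set" and E :: "'a \<Rightarrow> 'a \<Rightarrow> bool" and \<Gamma> :: real
  assumes "finite V" and "V \<noteq> {}"
    and "\<And>x y. E x y \<Longrightarrow> E y x" and "\<And>x. \<not> E x x"
    and "triangle_free V E" and "two_degenerate V E"
    and "1 \<le> \<Gamma>" and "\<Gamma> \<le> 2" and "\<Gamma> ^ 4 - \<Gamma> - 1 = 0"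
  shows "root (card V) (real (total_betti TYPE('k::field) V E)) \<le> \<Gamma>"
proof -
  have G4: "\<Gamma> ^ 4 = \<Gamma> + 1" using assms(9) by simp
  have b: "real (total_betti TYPE('k) V E) \<le> \<Gamma> ^ card V"
    by (rule main_bound[OF assms(3,4,7) G4 assms(1,5,6)])
  have n: "0 < card V" using assms(1,2) by (simp add: card_gt_0_iff)
  have "root (card V) (real (total_betti TYPE('k) V E)) \<le> root (card V) (\<Gamma> ^ card V)"
    using b n by simp
  also have "\<dots> = \<Gamma>" using n assms(7) by (simp add: real_root_power_cancel)
  finally show ?thesis .
qed

end
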